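(* Let $(\mathcal{D}_i)$ be an infinite family of symmetric designs with parameters $(v_i,k_i,\lambda_i)$ and orders $q_i=k_i-\lambda_i\ge 2$, in which $v_i$ is bounded above by a linear function of $q_i$ (i.e. $v_i=O(q_i)$), and let $\Gamma_i$ be the incidence graph of $\mathcal{D}_i$, with $n_i=2v_i$ vertices. Then $\mu(\Gamma_i)=\Theta(\log n_i)$.
   Context: A symmetric design with parameters $(v,k,\lambda)$ is a pair $(X,\mathcal{B})$ where $X$ is a set of $v$ points and $\mathcal{B}$ is a family of $k$-subsets of $X$ (blocks) such that any two distinct points lie in exactly $\lambda$ blocks and any two distinct blocks meet in exactly $\lambda$ points. Its order is $q=k-\lambda$. Its incidence graph is the bipartite graph on $X\cup\mathcal{B}$ with $x$ adjacent to $B$ iff $x\in B$. A resolving set of a connected graph is a set $S$ of vertices such that for any two distinct vertices $u,w$ some $s\in S$ has $d(u,s)\neq d(w,s)$; the metric dimension $\mu(\Gamma)$ is the minimum size of a resolving set. *)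

theory Defs
  imports Complex_Main "HOL-Library.Landau_Symbols"
begin

definition symmetric_design :: "'a set \<Rightarrow> 'a set set \<Rightarrow> nat \<Rightarrow> nat \<Rightarrow> nat \<Rightarrow> bool" where
  "symmetric_design X B v k l \<longleftrightarrow>
     finite X \<and> card X = v \<and> card B = v \<and>
     (\<forall>b\<in>B. b \<subseteq> X \<and> card b = k) \<and>
     (\<forall>x\<in>X. \<forall>y\<in>X. x \<noteq> y \<longrightarrow> card {b\<in>B. x \<in> b \<and> y \<in> b} = l) \<and>
     (\<forall>b\<in>B. \<forall>c\<in>B. b \<noteq> c \<longrightarrow> card (b \<inter> c) = l)"

fun walk_of_len :: "('v \<Rightarrow> 'v \<Rightarrow> bool) \<Rightarrow> nat \<Rightarrow> 'v \<Rightarrow> 'v \<Rightarrow> bool" where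
  "walk_of_len E 0 u w \<longleftrightarrow> u = w"
| "walk_of_len E (Suc n) u w \<longleftrightarrow> (\<exists>x. E u x \<and> walk_of_len E n x w)"

text \<open>Graph distance (length of a shortest walk); meaningful for connected graphs.\<close>
definition gdist :: "('v \<Rightarrow> 'v \<Rightarrow> bool) \<Rightarrow> 'v \<Rightarrow> 'v \<Rightarrow> nat" where
  "gdist E u w = (LEAST n. walk_of_len E n u w)"

definition resolving_set :: "'v set \<Rightarrow> ('v \<Rightarrow> 'v \<Rightarrow> bool) \<Rightarrow> 'v set \<Rightarrow> bool" where
  "resolving_set V E S \<longleftrightarrow> S \<subseteq> V \<and>
     (\<forall>u\<in>V. \<forall>w\<in>V. u \<noteq> w \<longrightarrow> (\<exists>s\<in>S. gdist E u s \<noteq> gdist E w s))"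

definition metric_dim :: "'v set \<Rightarrow> ('v \<Rightarrow> 'v \<Rightarrow> bool) \<Rightarrow> nat" where
  "metric_dim V E = (LEAST m. \<exists>S. finite S \<and> card S = m \<and> resolving_set V E S)"

definition inc_V :: "'a set \<Rightarrow> 'a set set \<Rightarrow> ('a + 'a set) set" where
  "inc_V X B = Inl ` X \<union> Inr ` B"

fun inc_E :: "'a set \<Rightarrow> 'a set set \<Rightarrow> ('a + 'a set) \<Rightarrow> ('a + 'a set) \<Rightarrow> bool" where
  "inc_E X B (Inl x) (Inr b) \<longleftrightarrow> x \<in> X \<and> b \<in> B \<and> x \<in> b"
| "inc_E X B (Inr b) (Inl x) \<longleftrightarrow> x \<in> X \<and> b \<in> B \<and> x \<in> b"
| "inc_E X B _ _ \<longleftrightarrow> False"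

end

theory Submission
  imports Defs "HOL-Library.FuncSet"
begin


lemma card_filter_sum: "finite B \<Longrightarrow> card {b\<in>B. P b} = (\<Sum>b\<in>B. if P b then 1 else (0::nat))"
  by (simp add: sum.If_cases Int_def)

lemma design_basic:
  assumes d: "symmetric_design X B v k l" and o: "l \<le> k" "k - l \<ge> 2" and v: "v > 0"
  shows "finite X" "finite B" "B \<noteq> {}" "X \<noteq> {}" "k \<ge> 2" "l \<ge> 1"
proof -
  show fX: "finite X" using d by (simp add: symmetric_design_def)
  have sub: "B \<subseteq> Pow X" using d by (auto simp: symmetric_design_def)
  show fB: "finite B" using sub fX finite_subset by blast
  show "B \<noteq> {}" using d v by (auto simp: symmetric_design_def)
  show "X \<noteq> {}" using d v by (auto simp: symmetric_design_def)
  show k2: "k \<ge> 2" using o by simp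
  obtain b where b: "b \<in> B" using \<open>B \<noteq> {}\<close> by blast
  have bX: "b \<subseteq> X" "card b = k" using d b by (auto simp: symmetric_design_def)
  have "1 < card b" using bX k2 by simp
  moreover have "finite b" using bX fX finite_subset by blast
  ultimately obtain x y where xy: "x \<in> b" "y \<in> b" "x \<noteq> y" using card_le_Suc0_iff_eq[of b] by force
  have "x \<in> X" "y \<in> X" using xy bX by auto
  then have "card {c\<in>B. x \<in> c \<and> y \<in> c} = l" using d xy unfolding symmetric_design_def by blast
  moreover have "b \<in> {c\<in>B. x \<in> c \<and> y \<in> c}" using b xy by auto
  moreover have "finite {c\<in>B. x \<in> c \<and> y \<in> c}" using fB by simp
  ultimately show "l \<ge> 1" by (metis One_nat_def Suc_leI card_gt_0_iff empty_iff)
qed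

lemma design_repl:
  assumes d: "symmetric_design X B v k l" and o: "l \<le> k" "k - l \<ge> 2" and v: "v > 0"
  shows "\<forall>x\<in>X. card {b\<in>B. x \<in> b} = k"
proof -
  note basic = design_basic[OF assms]
  have fX: "finite X" and fB: "finite B" using basic by auto
  have cX: "card X = v" and cB: "card B = v" and blk: "\<And>b. b \<in> B \<Longrightarrow> b \<subseteq> X \<and> card b = k"
    and pts: "\<And>x y. x \<in> X \<Longrightarrow> y \<in> X \<Longrightarrow> x \<noteq> y \<Longrightarrow> card {b\<in>B. x \<in> b \<and> y \<in> b} = l"
    using d by (auto simp: symmetric_design_def)
  define r where "r x = card {b\<in>B. x \<in> b}" for x
  have key: "r x * (k - 1) = (v - 1) * l" if x: "x \<in> X" for x
  proof -
    have "(\<Sum>y\<in>X-{x}. card {b\<in>B. x \<in> b \<and> y \<in> b}) = (\<Sum>y\<in>X-{x}. l)"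
      using pts x by (intro sum.cong) auto
    also have "\<dots> = (v - 1) * l" using cX x fX by simp
    finally have e1: "(\<Sum>y\<in>X-{x}. card {b\<in>B. x \<in> b \<and> y \<in> b}) = (v - 1) * l" .
    have "(\<Sum>y\<in>X-{x}. card {b\<in>B. x \<in> b \<and> y \<in> b})
        = (\<Sum>y\<in>X-{x}. \<Sum>b\<in>B. if x \<in> b \<and> y \<in> b then 1 else (0::nat))"
      using fB by (simp add: card_filter_sum)
    also have "\<dots> = (\<Sum>b\<in>B. \<Sum>y\<in>X-{x}. if x \<in> b \<and> y \<in> b then 1 else (0::nat))"
      by (rule sum.swap)
    also have "\<dots> = (\<Sum>b\<in>B. if x \<in> b then k - 1 else 0)"
    proof (intro sum.cong refl)
      fix b assume b: "b \<in> B"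
      have "(\<Sum>y\<in>X-{x}. if x \<in> b \<and> y \<in> b then 1 else (0::nat)) = card {y\<in>X-{x}. x \<in> b \<and> y \<in> b}"
        by (rule card_filter_sum[symmetric]) (simp add: fX)
      also have "\<dots> = (if x \<in> b then k - 1 else 0)"
      proof (cases "x \<in> b")
        case True
        have "{y\<in>X-{x}. x \<in> b \<and> y \<in> b} = b - {x}" using blk[OF b] True by auto
        then show ?thesis using True blk[OF b] by simp
      next
        case False then show ?thesis by simp
      qed
      finally show "(\<Sum>y\<in>X-{x}. if x \<in> b \<and> y \<in> b then 1 else (0::nat)) = (if x \<in> b then k - 1 else 0)" .
    qed
    also have "\<dots> = r x * (k - 1)" using fB by (simp add: r_def sum.If_cases Int_def)
    finally show ?thesis using e1 by simp
  qed
  have k1: "k - 1 > 0" using basic by simp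
  have const: "r x = r y" if "x \<in> X" "y \<in> X" for x y
  proof -
    have "r x * (k - 1) = r y * (k - 1)" using key[OF that(1)] key[OF that(2)] by simp
    then show ?thesis using k1 mult_right_cancel[of "k - 1" "r x" "r y"] by linarith
  qed
  obtain x0 where x0: "x0 \<in> X" using basic by blast
  have "(\<Sum>x\<in>X. r x) = (\<Sum>x\<in>X. \<Sum>b\<in>B. if x \<in> b then 1 else (0::nat))"
    using fB by (simp add: r_def card_filter_sum)
  also have "\<dots> = (\<Sum>b\<in>B. \<Sum>x\<in>X. if x \<in> b then 1 else (0::nat))" by (rule sum.swap)
  also have "\<dots> = (\<Sum>b\<in>B. k)"
  proof (intro sum.cong refl)
    fix b assume b: "b \<in> B"
    have "(\<Sum>x\<in>X. if x \<in> b then 1 else (0::nat)) = card {x\<in>X. x \<in> b}" using fX by (simp add: card_filter_sum)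
    also have "{x\<in>X. x \<in> b} = b" using blk[OF b] by auto
    finally show "(\<Sum>x\<in>X. if x \<in> b then 1 else (0::nat)) = k" using blk[OF b] by simp
  qed
  also have "\<dots> = v * k" using cB by simp
  finally have "(\<Sum>x\<in>X. r x) = v * k" .
  moreover have "(\<Sum>x\<in>X. r x) = (\<Sum>x\<in>X. r x0)"
    by (rule sum.cong[OF refl]) (rule const[OF _ x0])
  moreover have "(\<Sum>x\<in>X. r x0) = v * r x0" using cX by simp
  ultimately have "r x0 = k" using v by simp
  then show ?thesis using const x0 r_def by metis
qed




lemma inc_E_isl: "inc_E X B u w \<Longrightarrow> isl u \<noteq> isl w"
  by (cases u; cases w) auto

lemma walk_parity: "walk_of_len (inc_E X B) n u w \<Longrightarrow> (isl u = isl w) = even n"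
proof (induction n arbitrary: u)
  case 0 then show ?case by simp
next
  case (Suc n)
  then obtain x where "inc_E X B u x" "walk_of_len (inc_E X B) n x w" by auto
  then show ?case using Suc.IH inc_E_isl by fastforce
qed

lemma gdist_walk: "\<exists>n. walk_of_len E n u w \<Longrightarrow> walk_of_len E (gdist E u w) u w"
  unfolding gdist_def by (rule LeastI_ex)

lemma gdist_le: "walk_of_len E n u w \<Longrightarrow> gdist E u w \<le> n"
  unfolding gdist_def by (rule Least_le)

lemma gdist_one_iff:
  assumes "\<exists>n. walk_of_len E n u w" "u \<noteq> w"
  shows "gdist E u w = 1 \<longleftrightarrow> E u w"
proof
  assume "gdist E u w = 1"
  then show "E u w" using gdist_walk[OF assms(1)] by simp
next
  assume e: "E u w"
  have w1: "walk_of_len E 1 u w" using e by simp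
  have "gdist E u w \<le> 1" using gdist_le[OF w1] .
  moreover have "gdist E u w \<noteq> 0" using gdist_walk[OF assms(1)] assms(2) by (metis walk_of_len.simps(1))
  ultimately show "gdist E u w = 1" by simp
qed

lemma gdist_parity:
  assumes "\<exists>n. walk_of_len (inc_E X B) n u w"
  shows "(isl u = isl w) = even (gdist (inc_E X B) u w)"
  using walk_parity[OF gdist_walk[OF assms]] .

lemma connected:
  assumes d: "symmetric_design X B v k l" and o: "l \<le> k" "k - l \<ge> 2" and v: "v > 0"
    and u: "u \<in> inc_V X B" and w: "w \<in> inc_V X B"
  shows "\<exists>n\<le>3. walk_of_len (inc_E X B) n u w"
proof -
  note basic = design_basic[OF assms(1-4)]
  note repl = design_repl[OF assms(1-4)]
  have fB: "finite B" using basic by simp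
  have blk: "\<And>b. b \<in> B \<Longrightarrow> b \<subseteq> X \<and> card b = k"
    and pts: "\<And>x y. x \<in> X \<Longrightarrow> y \<in> X \<Longrightarrow> x \<noteq> y \<Longrightarrow> card {b\<in>B. x \<in> b \<and> y \<in> b} = l"
    and bls: "\<And>b c. b \<in> B \<Longrightarrow> c \<in> B \<Longrightarrow> b \<noteq> c \<Longrightarrow> card (b \<inter> c) = l"
    using d by (auto simp: symmetric_design_def)
  have l1: "l \<ge> 1" using basic by simp
  have inter: "\<exists>y. y \<in> b \<and> y \<in> c" if "b \<in> B" "c \<in> B" "b \<noteq> c" for b c
    using bls[OF that] l1 by (metis card.empty disjoint_iff not_one_le_zero)
  have common: "\<exists>b\<in>B. x \<in> b \<and> y \<in> b" if "x \<in> X" "y \<in> X" "x \<noteq> y" for x y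
  proof -
    have "{b\<in>B. x \<in> b \<and> y \<in> b} \<noteq> {}" using pts[OF that] l1 by (metis card.empty not_one_le_zero)
    then show ?thesis by auto
  qed
  have some: "\<exists>b\<in>B. x \<in> b" if "x \<in> X" for x
  proof -
    have "card {b\<in>B. x \<in> b} = k" using repl that by blast
    then have "{b\<in>B. x \<in> b} \<noteq> {}" using basic(5) by (metis card.empty not_numeral_le_zero)
    then show ?thesis by auto
  qed
  have pb: "\<exists>n\<le>3. walk_of_len (inc_E X B) n (Inl x) (Inr b) \<and> walk_of_len (inc_E X B) n (Inr b) (Inl x)"
    if x: "x \<in> X" and b: "b \<in> B" for x b
  proof (cases "x \<in> b")
    case True
    then have "walk_of_len (inc_E X B) (Suc 0) (Inl x) (Inr b) \<and> walk_of_len (inc_E X B) (Suc 0) (Inr b) (Inl x)"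
      using x b by simp
    then show ?thesis by (metis One_nat_def one_le_numeral)
  next
    case False
    obtain b' where b': "b' \<in> B" "x \<in> b'" using some[OF x] by blast
    then have "b' \<noteq> b" using False by auto
    then obtain y where y: "y \<in> b'" "y \<in> b" using inter[OF b'(1) b] by blast
    have yX: "y \<in> X" using y b blk by auto
    have "walk_of_len (inc_E X B) (Suc (Suc (Suc 0))) (Inl x) (Inr b) \<and> walk_of_len (inc_E X B) (Suc (Suc (Suc 0))) (Inr b) (Inl x)"
    proof -
      have e: "inc_E X B (Inl x) (Inr b')" "inc_E X B (Inr b') (Inl y)" "inc_E X B (Inl y) (Inr b)"
        "inc_E X B (Inr b) (Inl y)" "inc_E X B (Inl y) (Inr b')" "inc_E X B (Inr b') (Inl x)"
        using x b b' y yX by auto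
      show ?thesis apply simp using e by blast
    qed
    then show ?thesis by (metis numeral_3_eq_3 order_refl)
  qed
  show ?thesis
  proof (cases u)
    case (Inl x)
    then have x: "x \<in> X" using u by (auto simp: inc_V_def)
    show ?thesis
    proof (cases w)
      case (Inl y)
      then have y: "y \<in> X" using w by (auto simp: inc_V_def)
      show ?thesis
      proof (cases "x = y")
        case True then show ?thesis using Inl \<open>u = Inl x\<close> by (metis le0 walk_of_len.simps(1))
      next
        case False
        then obtain b where "b \<in> B" "x \<in> b" "y \<in> b" using common x y by blast
        then have "walk_of_len (inc_E X B) (Suc (Suc 0)) u w" using Inl \<open>u = Inl x\<close> x y by (auto intro!: exI[of _ "Inr b"])
        then show ?thesis by (metis Suc_1 Suc_leI numeral_3_eq_3 order_refl le_SucI)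
      qed
    next
      case (Inr b)
      then have b: "b \<in> B" using w by (auto simp: inc_V_def)
      show ?thesis using pb[OF x b] Inr \<open>u = Inl x\<close> by blast
    qed
  next
    case (Inr b)
    then have b: "b \<in> B" using u by (auto simp: inc_V_def)
    show ?thesis
    proof (cases w)
      case (Inl x)
      then have x: "x \<in> X" using w by (auto simp: inc_V_def)
      show ?thesis using pb[OF x b] Inl \<open>u = Inr b\<close> by blast
    next
      case (Inr c)
      then have c: "c \<in> B" using w by (auto simp: inc_V_def)
      show ?thesis
      proof (cases "b = c")
        case True then show ?thesis using Inr \<open>u = Inr b\<close> by (metis le0 walk_of_len.simps(1))
      next
        case False
        then obtain y where y: "y \<in> b" "y \<in> c" using inter b c by blast
        have "y \<in> X" using y b blk by auto
        then have "walk_of_len (inc_E X B) (Suc (Suc 0)) u w" using Inr \<open>u = Inr b\<close> b c y by (auto intro!: exI[of _ "Inl y"])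
        then show ?thesis by (metis Suc_1 Suc_leI numeral_3_eq_3 order_refl le_SucI)
      qed
    qed
  qed
qed




lemma resolving_construct:
  assumes d: "symmetric_design X B v k l" and o: "l \<le> k" "k - l \<ge> 2" and v: "v > 0"
    and T: "T \<subseteq> B" "T \<noteq> {}" and P: "P \<subseteq> X"
    and sepT: "\<forall>x\<in>X. \<forall>y\<in>X. x \<noteq> y \<longrightarrow> (\<exists>b\<in>T. x \<in> b \<and> y \<notin> b)"
    and sepP: "\<forall>b\<in>B. \<forall>c\<in>B. b \<noteq> c \<longrightarrow> (\<exists>z\<in>P. z \<in> b \<and> z \<notin> c)"
  shows "resolving_set (inc_V X B) (inc_E X B) (Inl ` P \<union> Inr ` T)"
  unfolding resolving_set_def
proof (intro conjI ballI impI)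
  show "Inl ` P \<union> Inr ` T \<subseteq> inc_V X B" using T P by (auto simp: inc_V_def)
  let ?E = "inc_E X B"
  have conn: "\<exists>n. walk_of_len ?E n u w" if "u \<in> inc_V X B" "w \<in> inc_V X B" for u w
    using connected[OF d o v that] by blast
  fix u w assume u: "u \<in> inc_V X B" and w: "w \<in> inc_V X B" and uw: "u \<noteq> w"
  show "\<exists>s\<in>Inl ` P \<union> Inr ` T. gdist ?E u s \<noteq> gdist ?E w s"
  proof (cases "isl u = isl w")
    case False
    obtain b where b: "b \<in> T" using T by blast
    then have s: "Inr b \<in> inc_V X B" using T by (auto simp: inc_V_def)
    have "even (gdist ?E u (Inr b)) \<noteq> even (gdist ?E w (Inr b))"
      using gdist_parity[OF conn[OF u s]] gdist_parity[OF conn[OF w s]] False by auto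
    then show ?thesis using b by force
  next
    case True
    show ?thesis
    proof (cases u)
      case (Inl x)
      then obtain y where wy: "w = Inl y" using True by (cases w) auto
      have x: "x \<in> X" and y: "y \<in> X" using u w Inl wy by (auto simp: inc_V_def)
      have "x \<noteq> y" using uw Inl wy by auto
      then obtain b where b: "b \<in> T" "x \<in> b" "y \<notin> b" using sepT x y by blast
      have s: "Inr b \<in> inc_V X B" using T b by (auto simp: inc_V_def)
      have "gdist ?E u (Inr b) = 1" using gdist_one_iff[OF conn[OF u s]] Inl b x T by auto
      moreover have "gdist ?E w (Inr b) \<noteq> 1" using gdist_one_iff[OF conn[OF w s]] wy b by auto
      ultimately show ?thesis using b by force
    next
      case (Inr b)
      then obtain c where wc: "w = Inr c" using True by (cases w) auto
      have b: "b \<in> B" and c: "c \<in> B" using u w Inr wc by (auto simp: inc_V_def)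
      have "b \<noteq> c" using uw Inr wc by auto
      then obtain z where z: "z \<in> P" "z \<in> b" "z \<notin> c" using sepP b c by blast
      have s: "Inl z \<in> inc_V X B" using P z by (auto simp: inc_V_def)
      have "gdist ?E u (Inl z) = 1" using gdist_one_iff[OF conn[OF u s]] Inr b z P by auto
      moreover have "gdist ?E w (Inl z) \<noteq> 1" using gdist_one_iff[OF conn[OF w s]] wc z by auto
      ultimately show ?thesis using z by force
    qed
  qed
qed

lemma card_inc_V:
  assumes "finite X" "finite B"
  shows "card (inc_V X B) = card X + card B"
  unfolding inc_V_def using assms
  by (subst card_Un_disjoint) (auto simp: card_image)

lemma lower_bound:
  assumes d: "symmetric_design X B v k l" and o: "l \<le> k" "k - l \<ge> 2" and v: "v > 0"
    and S: "resolving_set (inc_V X B) (inc_E X B) S" "finite S"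
  shows "2 * v \<le> 4 ^ card S"
proof -
  note basic = design_basic[OF d o v]
  let ?E = "inc_E X B" and ?V = "inc_V X B"
  have SV: "S \<subseteq> ?V" using S by (simp add: resolving_set_def)
  define \<phi> where "\<phi> u = restrict (\<lambda>s. gdist ?E u s) S" for u
  have inj: "inj_on \<phi> ?V"
  proof (rule inj_onI)
    fix u w assume u: "u \<in> ?V" and w: "w \<in> ?V" and e: "\<phi> u = \<phi> w"
    show "u = w"
    proof (rule ccontr)
      assume "u \<noteq> w"
      then obtain s where "s \<in> S" "gdist ?E u s \<noteq> gdist ?E w s" using S(1) u w unfolding resolving_set_def by blast
      then show False using e unfolding \<phi>_def by (metis restrict_apply')
    qed
  qed
  have img: "\<phi> ` ?V \<subseteq> PiE S (\<lambda>_. {0..3::nat})"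
  proof
    fix f assume "f \<in> \<phi> ` ?V"
    then obtain u where u: "u \<in> ?V" "f = \<phi> u" by blast
    have "gdist ?E u s \<le> 3" if sS: "s \<in> S" for s
    proof -
      obtain n where "n \<le> 3" "walk_of_len ?E n u s" using connected[OF d o v u(1)] SV sS by blast
      then show ?thesis using gdist_le by fastforce
    qed
    then show "f \<in> PiE S (\<lambda>_. {0..3::nat})" unfolding u \<phi>_def by auto
  qed
  have "card ?V = card (\<phi> ` ?V)" using inj by (simp add: card_image)
  also have "\<dots> \<le> card (PiE S (\<lambda>_. {0..3::nat}))"
    by (rule card_mono[OF _ img]) (simp add: finite_PiE S(2))
  also have "\<dots> = 4 ^ card S" using S(2) by (simp add: card_PiE)
  finally have "card ?V \<le> 4 ^ card S" .
  moreover have "card ?V = 2 * v" using card_inc_V[of X B] basic d by (simp add: symmetric_design_def)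
  ultimately show ?thesis by simp
qed




lemma hitting:
  fixes U :: "'b set" and Pr :: "'c set" and Sep :: "'c \<Rightarrow> 'b set"
  assumes U: "finite U" and Pr: "finite Pr" and S: "\<forall>p\<in>Pr. Sep p \<subseteq> U \<and> s \<le> card (Sep p)"
    and ineq: "card Pr * (card U - s) ^ m < card U ^ m"
  shows "\<exists>T. T \<subseteq> U \<and> card T \<le> m \<and> (m > 0 \<longrightarrow> T \<noteq> {}) \<and> (\<forall>p\<in>Pr. T \<inter> Sep p \<noteq> {})"
proof -
  define Bad where "Bad = (\<Union>p\<in>Pr. PiE {..<m} (\<lambda>_. U - Sep p))"
  have "card Bad \<le> (\<Sum>p\<in>Pr. card (PiE {..<m} (\<lambda>_. U - Sep p)))"
    unfolding Bad_def using Pr by (rule card_UN_le)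
  also have "\<dots> = (\<Sum>p\<in>Pr. card (U - Sep p) ^ m)" by (simp add: card_PiE)
  also have "\<dots> \<le> (\<Sum>p\<in>Pr. (card U - s) ^ m)"
  proof (intro sum_mono power_mono)
    fix p assume p: "p \<in> Pr"
    have "card (U - Sep p) = card U - card (Sep p)" using S p U by (meson card_Diff_subset finite_subset)
    moreover have "s \<le> card (Sep p)" using S p by blast
    ultimately show "card (U - Sep p) \<le> card U - s" by linarith
  qed simp
  also have "\<dots> = card Pr * (card U - s) ^ m" by simp
  also have "\<dots> < card (PiE {..<m} (\<lambda>_. U))" using ineq by (simp add: card_PiE)
  finally have "card Bad < card (PiE {..<m} (\<lambda>_. U))" .
  moreover have "finite Bad" unfolding Bad_def using Pr U by (auto intro!: finite_PiE)
  ultimately have "\<not> PiE {..<m} (\<lambda>_. U) \<subseteq> Bad" using card_mono by (metis leD)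
  then obtain f where f: "f \<in> PiE {..<m} (\<lambda>_. U)" "f \<notin> Bad" by blast
  define T where "T = f ` {..<m}"
  have "T \<subseteq> U" using f(1) unfolding T_def by auto
  moreover have "card T \<le> m" unfolding T_def using card_image_le[of "{..<m}" f] by simp
  moreover have "m > 0 \<longrightarrow> T \<noteq> {}" unfolding T_def by auto
  moreover have "\<forall>p\<in>Pr. T \<inter> Sep p \<noteq> {}"
  proof
    fix p assume p: "p \<in> Pr"
    have "f \<notin> PiE {..<m} (\<lambda>_. U - Sep p)" using f(2) p unfolding Bad_def by blast
    then obtain j where "j < m" "f j \<notin> U - Sep p" using f(1) by (auto simp: PiE_def Pi_def)
    then show "T \<inter> Sep p \<noteq> {}" using f(1) unfolding T_def by auto
  qed
  ultimately show ?thesis by blast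
qed

lemma numeric:
  fixes v q :: nat and C :: real
  assumes C: "C \<ge> 1" and v: "v \<ge> 2" and vq: "real v \<le> C * real q" and qv: "q \<le> v"
  shows "\<exists>m. m \<ge> 1 \<and> v * v * (v - q) ^ m < v ^ m \<and> real m \<le> (2 * C + 2) * ln (real (2 * v))"
proof -
  define m where "m = nat \<lceil>2 * C * ln (real v)\<rceil> + 1"
  have lnv: "ln (real v) \<ge> 0" using v by simp
  define x where "x = 2 * C * ln (real v)"
  have x0: "x \<ge> 0" unfolding x_def using lnv C by simp
  have c1: "real (nat \<lceil>x\<rceil>) = real_of_int \<lceil>x\<rceil>" using x0 by simp
  have c2: "x \<le> real_of_int \<lceil>x\<rceil>" "real_of_int \<lceil>x\<rceil> < x + 1" using ceiling_correct[of x] by linarith+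
  have mm: "real m = real (nat \<lceil>x\<rceil>) + 1" unfolding m_def x_def by simp
  have m_gt: "real m > 2 * C * ln (real v)" using mm c1 c2 unfolding x_def by linarith
  have m_le: "real m \<le> 2 * C * ln (real v) + 2" using mm c1 c2 unfolding x_def by linarith
  have vpos: "real v > 0" using v by simp
  have d1: "real (v - q) \<le> real v * exp (- 1 / C)"
  proof -
    have "real (v - q) = real v - real q" using qv by simp
    also have "\<dots> \<le> real v - real v / C" using vq C by (simp add: field_simps)
    also have "\<dots> = real v * (1 + (- 1 / C))" by (simp add: field_simps)
    also have "\<dots> \<le> real v * exp (- 1 / C)" using vpos by (intro mult_left_mono exp_ge_add_one_self) auto
    finally show ?thesis .
  qed
  have d2: "real (v - q) ^ m \<le> real v ^ m * exp (- real m / C)"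
  proof -
    have "real (v - q) ^ m \<le> (real v * exp (- 1 / C)) ^ m" using d1 by (intro power_mono) auto
    also have "\<dots> = real v ^ m * exp (- 1 / C) ^ m" by (simp add: power_mult_distrib)
    also have "\<dots> = real v ^ m * exp (- real m / C)"
    proof -
      have "exp (- 1 / C) ^ m = exp (real m * (- 1 / C))" by (rule exp_of_nat_mult[symmetric])
      also have "real m * (- 1 / C) = - real m / C" by simp
      finally show ?thesis by simp
    qed
    finally show ?thesis .
  qed
  have d3: "real v * real v * exp (- real m / C) < 1"
  proof -
    have "real m / C > 2 * ln (real v)" using m_gt C by (simp add: field_simps)
    then have "exp (real m / C) > exp (2 * ln (real v))" by simp
    also have "exp (2 * ln (real v)) = real v * real v" using vpos
      by (simp only: mult_2 exp_add exp_ln[OF vpos])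
    finally have "real v * real v < exp (real m / C)" .
    then show ?thesis by (simp add: exp_minus field_simps)
  qed
  have "real (v * v * (v - q) ^ m) = real v * real v * real (v - q) ^ m" by simp
  also have "\<dots> \<le> real v * real v * (real v ^ m * exp (- real m / C))" using d2 by (intro mult_left_mono) auto
  also have "\<dots> = real v ^ m * (real v * real v * exp (- real m / C))" by simp
  also have "\<dots> < real v ^ m * 1" using d3 vpos by (intro mult_strict_left_mono) auto
  finally have "real (v * v * (v - q) ^ m) < real (v ^ m)" by simp
  then have A: "v * v * (v - q) ^ m < v ^ m" by (simp only: of_nat_less_iff)
  have ln4: "ln (real (2 * v)) \<ge> 1"
  proof -
    have "exp 1 \<le> (3::real)" by (rule exp_le)
    also have "3 \<le> real (2 * v)" using v by simp
    finally show ?thesis using vpos by (simp add: ln_ge_iff)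
  qed
  have "ln (real v) \<le> ln (real (2 * v))" using vpos by simp
  then have "real m \<le> 2 * C * ln (real (2 * v)) + 2 * ln (real (2 * v))"
    using m_le ln4 C by (smt (verit) mult_left_mono)
  then have "real m \<le> (2 * C + 2) * ln (real (2 * v))" by (simp add: algebra_simps)
  moreover have "m \<ge> 1" unfolding m_def by simp
  ultimately show ?thesis using A by blast
qed




lemma per_design:
  assumes d: "symmetric_design X B v k l" and o: "l \<le> k" "k - l \<ge> 2"
    and C: "C \<ge> 1" and vq: "real v \<le> C * real (k - l)"
  shows "real (metric_dim (inc_V X B) (inc_E X B)) \<le> (4 * C + 4) * ln (real (2 * v))
     \<and> ln (real (2 * v)) \<le> ln 4 * real (metric_dim (inc_V X B) (inc_E X B))"
proof (cases "v = 0")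
  case True
  have fX: "finite X" "card X = 0" using d True by (auto simp: symmetric_design_def)
  then have X0: "X = {}" by simp
  have "B \<subseteq> {{}}" using d X0 by (auto simp: symmetric_design_def)
  then have "finite B" using finite_subset by blast
  then have B0: "B = {}" using d True by (simp add: symmetric_design_def)
  have "resolving_set (inc_V X B) (inc_E X B) {}" using X0 B0 by (simp add: resolving_set_def inc_V_def)
  then have "\<exists>S. finite S \<and> card S = 0 \<and> resolving_set (inc_V X B) (inc_E X B) S"
    by (intro exI[of _ "{}"]) simp
  then have "metric_dim (inc_V X B) (inc_E X B) = 0" unfolding metric_dim_def
    by (rule Least_eq_0)
  then show ?thesis using True by simp
next
  case False
  then have v: "v > 0" by simp
  note basic = design_basic[OF d o v]
  note repl = design_repl[OF d o v]
  have fX: "finite X" and fB: "finite B" using basic by auto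
  have cX: "card X = v" and cB: "card B = v" and blk: "\<And>b. b \<in> B \<Longrightarrow> b \<subseteq> X \<and> card b = k"
    and pts: "\<And>x y. x \<in> X \<Longrightarrow> y \<in> X \<Longrightarrow> x \<noteq> y \<Longrightarrow> card {b\<in>B. x \<in> b \<and> y \<in> b} = l"
    and bls: "\<And>b c. b \<in> B \<Longrightarrow> c \<in> B \<Longrightarrow> b \<noteq> c \<Longrightarrow> card (b \<inter> c) = l"
    using d by (auto simp: symmetric_design_def)
  obtain b0 where b0: "b0 \<in> B" using basic by blast
  have kv: "k \<le> v" using blk[OF b0] fX cX card_mono by metis
  have v2: "v \<ge> 2" using kv basic by simp
  have qv: "k - l \<le> v" using kv by simp
  obtain m where m: "m \<ge> 1" "v * v * (v - (k - l)) ^ m < v ^ m"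
    "real m \<le> (2 * C + 2) * ln (real (2 * v))"
    using numeric[OF C v2 vq qv] by blast
  define PrX where "PrX = {(x, y). x \<in> X \<and> y \<in> X \<and> x \<noteq> y}"
  define SepX where "SepX p = {b\<in>B. fst p \<in> b \<and> snd p \<notin> b}" for p
  have PrX_fin: "finite PrX" and PrX_card: "card PrX \<le> v * v"
  proof -
    have "PrX \<subseteq> X \<times> X" unfolding PrX_def by auto
    then show "finite PrX" "card PrX \<le> v * v" using fX cX card_mono[of "X \<times> X" PrX]
      by (auto simp: card_cartesian_product finite_subset)
  qed
  have SepX: "\<forall>p\<in>PrX. SepX p \<subseteq> B \<and> k - l \<le> card (SepX p)"
  proof
    fix p assume p: "p \<in> PrX"
    obtain x y where xy: "p = (x, y)" "x \<in> X" "y \<in> X" "x \<noteq> y" using p unfolding PrX_def by auto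
    have "{b\<in>B. x \<in> b} = {b\<in>B. x \<in> b \<and> y \<in> b} \<union> {b\<in>B. x \<in> b \<and> y \<notin> b}" by auto
    moreover have "card ({b\<in>B. x \<in> b \<and> y \<in> b} \<union> {b\<in>B. x \<in> b \<and> y \<notin> b}) = card {b\<in>B. x \<in> b \<and> y \<in> b} + card {b\<in>B. x \<in> b \<and> y \<notin> b}"
      by (rule card_Un_disjoint) (use fB in auto)
    ultimately have "card {b\<in>B. x \<in> b} = card {b\<in>B. x \<in> b \<and> y \<in> b} + card {b\<in>B. x \<in> b \<and> y \<notin> b}" by simp
    then have "card {b\<in>B. x \<in> b \<and> y \<notin> b} = k - l" using repl xy pts by simp
    then show "SepX p \<subseteq> B \<and> k - l \<le> card (SepX p)" unfolding SepX_def xy by auto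
  qed
  have "card PrX * (card B - (k - l)) ^ m < card B ^ m"
    using m(2) PrX_card cB by (meson le_less_trans mult_le_mono1)
  from hitting[OF fB PrX_fin SepX this] obtain T where T: "T \<subseteq> B" "card T \<le> m" "T \<noteq> {}"
    "\<forall>p\<in>PrX. T \<inter> SepX p \<noteq> {}" using m(1) by auto
  have sepT: "\<forall>x\<in>X. \<forall>y\<in>X. x \<noteq> y \<longrightarrow> (\<exists>b\<in>T. x \<in> b \<and> y \<notin> b)"
  proof (intro ballI impI)
    fix x y assume "x \<in> X" "y \<in> X" "x \<noteq> y"
    then have "(x, y) \<in> PrX" unfolding PrX_def by auto
    then show "\<exists>b\<in>T. x \<in> b \<and> y \<notin> b" using T(4) unfolding SepX_def by auto
  qed
  define PrB where "PrB = {(b, c). b \<in> B \<and> c \<in> B \<and> b \<noteq> c}"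
  define SepB where "SepB p = fst p - snd p" for p :: "'a set \<times> 'a set"
  have PrB_fin: "finite PrB" and PrB_card: "card PrB \<le> v * v"
  proof -
    have "PrB \<subseteq> B \<times> B" unfolding PrB_def by auto
    then show "finite PrB" "card PrB \<le> v * v" using fB cB card_mono[of "B \<times> B" PrB]
      by (auto simp: card_cartesian_product finite_subset)
  qed
  have SepB: "\<forall>p\<in>PrB. SepB p \<subseteq> X \<and> k - l \<le> card (SepB p)"
  proof
    fix p assume p: "p \<in> PrB"
    obtain b c where bc: "p = (b, c)" "b \<in> B" "c \<in> B" "b \<noteq> c" using p unfolding PrB_def by auto
    have fb: "finite b" using blk[OF bc(2)] fX finite_subset by blast
    have "card (b - c) = card b - card (b \<inter> c)" using fb by (metis card_Diff_subset_Int finite_Int)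
    then have "card (b - c) = k - l" using blk bc bls by simp
    then show "SepB p \<subseteq> X \<and> k - l \<le> card (SepB p)" unfolding SepB_def bc using blk[OF bc(2)] by auto
  qed
  have "card PrB * (card X - (k - l)) ^ m < card X ^ m"
    using m(2) PrB_card cX by (meson le_less_trans mult_le_mono1)
  from hitting[OF fX PrB_fin SepB this] obtain P where P: "P \<subseteq> X" "card P \<le> m"
    "\<forall>p\<in>PrB. P \<inter> SepB p \<noteq> {}" by auto
  have sepP: "\<forall>b\<in>B. \<forall>c\<in>B. b \<noteq> c \<longrightarrow> (\<exists>z\<in>P. z \<in> b \<and> z \<notin> c)"
  proof (intro ballI impI)
    fix b c assume "b \<in> B" "c \<in> B" "b \<noteq> c"
    then have "(b, c) \<in> PrB" unfolding PrB_def by auto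
    then show "\<exists>z\<in>P. z \<in> b \<and> z \<notin> c" using P(3) unfolding SepB_def by auto
  qed
  define S where "S = Inl ` P \<union> Inr ` T"
  have res: "resolving_set (inc_V X B) (inc_E X B) S"
    unfolding S_def by (rule resolving_construct[OF d o v T(1) T(3) P(1) sepT sepP])
  have fP: "finite P" using P(1) fX by (rule finite_subset)
  have fT: "finite T" using T(1) fB by (rule finite_subset)
  have finS: "finite S" unfolding S_def using fP fT by simp
  have "card S \<le> card (Inl ` P :: ('a + 'a set) set) + card (Inr ` T :: ('a + 'a set) set)" unfolding S_def by (rule card_Un_le[of "Inl ` P" "Inr ` T"])
  also have "\<dots> \<le> card P + card T" by (intro add_mono card_image_le fP fT)
  also have "\<dots> \<le> 2 * m" using P(2) T(2) by simp
  finally have cS: "card S \<le> 2 * m" .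
  define M where "M = metric_dim (inc_V X B) (inc_E X B)"
  have ex: "\<exists>S. finite S \<and> card S = card S \<and> resolving_set (inc_V X B) (inc_E X B) S" using finS res by blast
  have "M \<le> card S" unfolding M_def metric_dim_def by (rule Least_le) (use finS res in blast)
  then have "M \<le> 2 * m" using cS by linarith
  then have "real M \<le> 2 * real m" by simp
  moreover have "(4 * C + 4) * ln (real (2 * v)) = 2 * ((2 * C + 2) * ln (real (2 * v)))" by (simp add: algebra_simps)
  ultimately have up: "real M \<le> (4 * C + 4) * ln (real (2 * v))" using m(3) by linarith
  have "\<exists>S'. finite S' \<and> card S' = M \<and> resolving_set (inc_V X B) (inc_E X B) S'"
    unfolding M_def metric_dim_def by (rule LeastI_ex) (use finS res in blast)
  then obtain S' where S': "finite S'" "card S' = M" "resolving_set (inc_V X B) (inc_E X B) S'" by blast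
  have "2 * v \<le> 4 ^ M" using lower_bound[OF d o v S'(3) S'(1)] S'(2) by simp
  then have "real (2 * v) \<le> 4 ^ M" by (metis of_nat_le_iff of_nat_numeral of_nat_power)
  then have "ln (real (2 * v)) \<le> ln (4 ^ M)" using v by (subst ln_le_cancel_iff) auto
  also have "ln ((4::real) ^ M) = real M * ln 4" by (simp add: ln_realpow)
  finally have "ln (real (2 * v)) \<le> ln 4 * real M" by (simp add: mult.commute)
  then show ?thesis using up unfolding M_def by blast
qed


theorem corollary2p8:
  fixes X :: "nat \<Rightarrow> 'a set" and B :: "nat \<Rightarrow> 'a set set"
    and v k l :: "nat \<Rightarrow> nat"
  assumes designs: "\<forall>i. symmetric_design (X i) (B i) (v i) (k i) (l i)"
    and order: "\<forall>i. l i \<le> k i \<and> k i - l i \<ge> 2"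
    and linear: "(\<lambda>i. real (v i)) \<in> O(\<lambda>i. real (k i - l i))"
  shows "(\<lambda>i. real (metric_dim (inc_V (X i) (B i)) (inc_E (X i) (B i))))
           \<in> \<Theta>(\<lambda>i. ln (real (2 * v i)))"
proof -
  obtain c where c: "c > 0" "eventually (\<lambda>i. norm (real (v i)) \<le> c * norm (real (k i - l i))) at_top"
    using linear by (elim landau_o.bigE) auto
  define C where "C = max c 1"
  have C1: "C \<ge> 1" unfolding C_def by simp
  have ev: "eventually (\<lambda>i. real (v i) \<le> C * real (k i - l i)) at_top"
    using c(2)
  proof (rule eventually_mono)
    fix i assume "norm (real (v i)) \<le> c * norm (real (k i - l i))"
    then have "real (v i) \<le> c * real (k i - l i)" by simp
    also have "\<dots> \<le> C * real (k i - l i)" unfolding C_def by (intro mult_right_mono) auto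
    finally show "real (v i) \<le> C * real (k i - l i)" .
  qed
  have ln4: "ln (4::real) > 0" by simp
  show ?thesis
  proof (rule bigthetaI'[of "1 / ln 4" "4 * C + 4"])
    show "1 / ln 4 > (0::real)" using ln4 by simp
    show "4 * C + 4 > 0" using C1 by simp
    show "eventually (\<lambda>i. 1 / ln 4 * norm (ln (real (2 * v i)))
        \<le> norm (real (metric_dim (inc_V (X i) (B i)) (inc_E (X i) (B i))))
      \<and> norm (real (metric_dim (inc_V (X i) (B i)) (inc_E (X i) (B i))))
        \<le> (4 * C + 4) * norm (ln (real (2 * v i)))) at_top"
      using ev
    proof (rule eventually_mono)
      fix i assume vi: "real (v i) \<le> C * real (k i - l i)"
      note pd = per_design[OF designs[rule_format, of i] conjunct1[OF order[rule_format, of i]]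
          conjunct2[OF order[rule_format, of i]] C1 vi]
      have nn: "ln (real (2 * v i)) \<ge> 0" by (cases "v i = 0") auto
      have "1 / ln 4 * ln (real (2 * v i)) \<le> real (metric_dim (inc_V (X i) (B i)) (inc_E (X i) (B i)))"
        using pd ln4 by (simp add: field_simps)
      then show "1 / ln 4 * norm (ln (real (2 * v i)))
        \<le> norm (real (metric_dim (inc_V (X i) (B i)) (inc_E (X i) (B i))))
      \<and> norm (real (metric_dim (inc_V (X i) (B i)) (inc_E (X i) (B i))))
        \<le> (4 * C + 4) * norm (ln (real (2 * v i)))" using pd nn by simp
    qed
  qed
qed

end
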